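(* Let $\Phi(\xi;t_5,t_2,x)=\big[\mathbb I+\sum_{k\ge1}\Phi_k\xi^{-k}\big]e^{\Theta(\xi;t_5,t_2,x)}$ be a formal solution at $\xi=\infty$ of $\partial_\xi\Phi=\mathcal L(\xi;t_5,t_2,x)\Phi$. Then $\Phi(\xi;t_5,t_2,x)=\mathcal S^T\Phi(\omega\xi;t_5,t_2,x)\mathcal S$, and the coefficients satisfy $\Phi_k=\omega^{-k}\mathcal S^T\Phi_k\mathcal S$ for all $k$.
   Context: $\omega=e^{2\pi i/3}$, $\mathcal S=\begin{pmatrix}0&1&0\\0&0&1\\1&0&0\end{pmatrix}$. $\Theta=\mathrm{diag}(\vartheta_1,\vartheta_2,\vartheta_3)$ with $\vartheta_j(\xi)=\frac37\omega^{j-1}\xi^7+\omega^{1-j}t_5\xi^5+\omega^{1-j}t_2\xi^2+\omega^{j-1}x\xi$. $\mathcal L(\xi):=3\xi^2g(\xi)^{-1}L(\xi^3)g(\xi)-g(\xi)^{-1}g'(\xi)$ with $g(\xi)=\frac i{\sqrt3}\mathrm{diag}(\xi,1,\xi^{-1})\begin{pmatrix}1&\omega&\omega^2\\1&1&1\\1&\omega^2&\omega\end{pmatrix}$ and $L(\lambda)=E_{13}\lambda^2+\begin{pmatrix}0&2t_5+\frac14Q_U&-Q_V\\1&0&2t_5+\frac14Q_U\\0&1&0\end{pmatrix}\lambda+L_0$ ($E_{ij}$ matrix units, $Q_a,P_a$ parameters), $L_0$ with rows $(\tfrac18Q_U^2-P_W+\tfrac12P_V-\tfrac14t_5Q_U-\tfrac16t_5^2,L_{12},L_{13})$,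 $(\tfrac12Q_V-\tfrac14Q_W,2P_W-\tfrac14Q_U^2+\tfrac12t_5Q_U+\tfrac13t_5^2,L_{23})$, $(t_5-\tfrac12Q_U,\tfrac12Q_V+\tfrac14Q_W,\tfrac18Q_U^2-P_W-\tfrac12P_V-\tfrac14t_5Q_U-\tfrac16t_5^2)$, $L_{12}=\tfrac5{16}Q_UQ_W-P_U+\tfrac14t_5Q_W-\tfrac38Q_UQ_V-\tfrac12t_5Q_V+t_2$, $L_{13}=\tfrac1{16}Q_W^2+\tfrac7{32}Q_U^3+\tfrac34Q_V^2-\tfrac32P_WQ_U+\tfrac5{16}t_5Q_U^2-2t_5P_W+\tfrac14t_5^2Q_U+x+\tfrac8{27}t_5^3$, $L_{23}=-\tfrac5{16}Q_UQ_W+P_U-\tfrac14t_5Q_W-\tfrac38Q_UQ_V-\tfrac12t_5Q_V+t_2$. *)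

theory Defs
  imports "HOL-Analysis.Analysis" "HOL-Computational_Algebra.Formal_Laurent_Series"
begin

text \<open>Formal Laurent series in the variable z = 1/xi (fls_X = z, fls_X_inv = xi).
  A formal series I + sum_k Phi_k xi^(-k) is a power series in z.\<close>

definition omega :: complex where "omega = exp (2 * of_real pi * \<i> / 3)"

definition Smat :: "complex^3^3" where
  "Smat = vector [vector [0,1,0], vector [0,0,1], vector [1,0,0]]"

definition diag3 :: "'a::zero \<Rightarrow> 'a \<Rightarrow> 'a \<Rightarrow> 'a^3^3" where
  "diag3 a b c = vector [vector [a,0,0], vector [0,b,0], vector [0,0,c]]"

definition xi :: "complex fls" where "xi = fls_X_inv"

text \<open>d/dxi on Laurent series in z = 1/xi: d/dxi = - z^2 d/dz\<close>
definition dxi :: "complex fls \<Rightarrow> complex fls" where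
  "dxi f = - (fls_X ^ 2 * fls_deriv f)"

definition mdxi :: "complex fls^3^3 \<Rightarrow> complex fls^3^3" where
  "mdxi A = (\<chi> i j. dxi (A $ i $ j))"

definition cmat :: "complex^3^3 \<Rightarrow> complex fls^3^3" where
  "cmat A = (\<chi> i j. fls_const (A $ i $ j))"

definition sm :: "complex fls \<Rightarrow> complex fls^3^3 \<Rightarrow> complex fls^3^3" where
  "sm s A = (\<chi> i j. s * A $ i $ j)"

definition E13 :: "complex^3^3" where
  "E13 = vector [vector [0,0,1], vector [0,0,0], vector [0,0,0]]"

definition L1 :: "complex \<Rightarrow> complex \<Rightarrow> complex \<Rightarrow> complex^3^3" where
  "L1 t5 QU QV = vector [vector [0, 2*t5 + QU/4, - QV],
                         vector [1, 0, 2*t5 + QU/4],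
                         vector [0, 1, 0]]"

definition L0 :: "complex \<Rightarrow> complex \<Rightarrow> complex \<Rightarrow> complex \<Rightarrow> complex \<Rightarrow> complex \<Rightarrow> complex
    \<Rightarrow> complex \<Rightarrow> complex \<Rightarrow> complex^3^3" where
  "L0 t5 t2 x QU QV QW PU PV PW =
    (let L12 = 5/16*QU*QW - PU + 1/4*t5*QW - 3/8*QU*QV - 1/2*t5*QV + t2;
         L13 = 1/16*QW^2 + 7/32*QU^3 + 3/4*QV^2 - 3/2*PW*QU + 5/16*t5*QU^2 - 2*t5*PW
               + 1/4*t5^2*QU + x + 8/27*t5^3;
         L23 = -5/16*QU*QW + PU - 1/4*t5*QW - 3/8*QU*QV - 1/2*t5*QV + t2
     in vector [vector [1/8*QU^2 - PW + 1/2*PV - 1/4*t5*QU - 1/6*t5^2, L12, L13],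
                vector [1/2*QV - 1/4*QW, 2*PW - 1/4*QU^2 + 1/2*t5*QU + 1/3*t5^2, L23],
                vector [t5 - 1/2*QU, 1/2*QV + 1/4*QW,
                        1/8*QU^2 - PW - 1/2*PV - 1/4*t5*QU - 1/6*t5^2]])"

definition Lpoly :: "complex \<Rightarrow> complex \<Rightarrow> complex \<Rightarrow> complex \<Rightarrow> complex \<Rightarrow> complex \<Rightarrow> complex
    \<Rightarrow> complex \<Rightarrow> complex \<Rightarrow> complex fls \<Rightarrow> complex fls^3^3" where
  "Lpoly t5 t2 x QU QV QW PU PV PW lam =
     (\<chi> i j. lam^2 * fls_const (E13 $ i $ j) + lam * fls_const (L1 t5 QU QV $ i $ j)
             + fls_const (L0 t5 t2 x QU QV QW PU PV PW $ i $ j))"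

definition Mmat :: "complex^3^3" where
  "Mmat = vector [vector [1, omega, omega^2], vector [1,1,1], vector [1, omega^2, omega]]"

definition gmat :: "complex fls^3^3" where
  "gmat = sm (fls_const (\<i> / of_real (sqrt 3))) (diag3 xi 1 (inverse xi) ** cmat Mmat)"

definition Lcal :: "complex \<Rightarrow> complex \<Rightarrow> complex \<Rightarrow> complex \<Rightarrow> complex \<Rightarrow> complex \<Rightarrow> complex
    \<Rightarrow> complex \<Rightarrow> complex \<Rightarrow> complex fls^3^3" where
  "Lcal t5 t2 x QU QV QW PU PV PW =
     sm (fls_const 3 * xi^2) (matrix_inv gmat ** Lpoly t5 t2 x QU QV QW PU PV PW (xi^3) ** gmat)
     - matrix_inv gmat ** mdxi gmat"

definition theta :: "nat \<Rightarrow> complex \<Rightarrow> complex \<Rightarrow> complex \<Rightarrow> complex \<Rightarrow> complex" where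
  "theta j t5 t2 x z = 3/7 * omega^(j-1) * z^7 + inverse omega^(j-1) * t5 * z^5
                       + inverse omega^(j-1) * t2 * z^2 + omega^(j-1) * x * z"

definition theta_fls :: "nat \<Rightarrow> complex \<Rightarrow> complex \<Rightarrow> complex \<Rightarrow> complex fls" where
  "theta_fls j t5 t2 x = fls_const (3/7 * omega^(j-1)) * xi^7 + fls_const (inverse omega^(j-1) * t5) * xi^5
                       + fls_const (inverse omega^(j-1) * t2) * xi^2 + fls_const (omega^(j-1) * x) * xi"

definition dTheta :: "complex \<Rightarrow> complex \<Rightarrow> complex \<Rightarrow> complex fls^3^3" where
  "dTheta t5 t2 x = diag3 (dxi (theta_fls 1 t5 t2 x)) (dxi (theta_fls 2 t5 t2 x)) (dxi (theta_fls 3 t5 t2 x))"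

definition expTheta :: "complex \<Rightarrow> complex \<Rightarrow> complex \<Rightarrow> complex \<Rightarrow> complex^3^3" where
  "expTheta t5 t2 x z = diag3 (exp (theta 1 t5 t2 x z)) (exp (theta 2 t5 t2 x z)) (exp (theta 3 t5 t2 x z))"

definition Yser :: "(nat \<Rightarrow> complex^3^3) \<Rightarrow> complex fls^3^3" where
  "Yser Phi = (\<chi> i j. fps_to_fls (Abs_fps (\<lambda>k. Phi k $ i $ j)))"

text \<open>Phi = Y e^Theta is a formal solution of Phi' = L Phi iff Y' + Y Theta' = L Y\<close>
definition formal_solution ::
  "complex \<Rightarrow> complex \<Rightarrow> complex \<Rightarrow> complex \<Rightarrow> complex \<Rightarrow> complex \<Rightarrow> complex
    \<Rightarrow> complex \<Rightarrow> complex \<Rightarrow> (nat \<Rightarrow> complex^3^3) \<Rightarrow> bool" where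
  "formal_solution t5 t2 x QU QV QW PU PV PW Phi \<longleftrightarrow>
     Phi 0 = mat 1 \<and>
     mdxi (Yser Phi) + Yser Phi ** dTheta t5 t2 x = Lcal t5 t2 x QU QV QW PU PV PW ** Yser Phi"

end

theory Submission
  imports Defs
begin

lemma omega_alt: "omega = Complex (-1/2) (sqrt 3 / 2)"
proof -
  have "omega = exp (\<i> * complex_of_real (2*pi/3))" unfolding omega_def by (simp add: field_simps)
  also have "\<dots> = Complex (cos (2*pi/3)) (sin (2*pi/3))" by (simp add: exp_eq_polar cis.ctr)
  also have "cos (2*pi/3) = -1/2"
  proof -
    have "cos (2*pi/3) = cos (pi - pi/3)" by (simp add: field_simps)
    also have "\<dots> = - cos (pi/3)" by (simp only: cos_pi_minus)
    finally show ?thesis by (simp add: cos_60)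
  qed
  also have "sin (2*pi/3) = sqrt 3 / 2"
  proof -
    have "sin (2*pi/3) = sin (pi - pi/3)" by (simp add: field_simps)
    also have "\<dots> = sin (pi/3)" by (simp only: sin_pi_minus)
    finally show ?thesis by (simp add: sin_60)
  qed
  finally show ?thesis .
qed

lemma o2: "omega^2 = Complex (-1/2) (- sqrt 3 / 2)"
  unfolding omega_alt power2_eq_square by (simp add: complex_eq_iff)
lemma omega3: "omega ^ 3 = 1"
  unfolding power3_eq_cube o2[unfolded power2_eq_square] by (simp add: omega_alt complex_eq_iff)
lemma omega_nz: "omega \<noteq> 0" unfolding omega_alt by (simp add: complex_eq_iff)
lemma omega_ne1: "omega \<noteq> 1" unfolding omega_alt by (simp add: complex_eq_iff)
lemma omega_sum: "1 + omega + omega^2 = 0"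
  unfolding o2 by (simp add: omega_alt complex_eq_iff)
lemma omega_sq_ne1: "omega^2 \<noteq> 1"
  unfolding o2 by (simp add: complex_eq_iff)
lemma omega_sq_ne: "omega^2 \<noteq> omega"
  using omega_ne1 omega_nz by (simp add: power2_eq_square)
lemma omega_inv: "inverse omega = omega^2"
  using omega3 omega_nz by (simp add: field_simps power3_eq_cube power2_eq_square)
lemma omega_pow_mod: "omega ^ n = omega ^ (n mod 3)"
proof -
  have "omega ^ n = omega ^ (3 * (n div 3) + n mod 3)" by simp
  also have "\<dots> = omega ^ (n mod 3)" by (simp only: power_add power_mult omega3) simp
  finally show ?thesis .
qed

lemma theta_rot:
  "theta 1 t5 t2 x (omega * z) = theta 2 t5 t2 x z"
  "theta 2 t5 t2 x (omega * z) = theta 3 t5 t2 x z"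
  "theta 3 t5 t2 x (omega * z) = theta 1 t5 t2 x z"
proof -
  have o7: "omega^7 = omega" using omega3 by (subst omega_pow_mod) simp
  have o5: "omega^5 = omega^2" by (subst omega_pow_mod) simp
  have o4: "omega^4 = omega" by (subst omega_pow_mod) simp
  have i2: "inverse omega ^ 2 = omega" using omega_inv o4 by (simp add: power_mult[symmetric])
  show "theta 1 t5 t2 x (omega * z) = theta 2 t5 t2 x z"
    unfolding theta_def by (simp add: power_mult_distrib o7 o5 omega_inv o4)
  show "theta 2 t5 t2 x (omega * z) = theta 3 t5 t2 x z"
    using omega3 unfolding theta_def omega_inv by simp algebra
  show "theta 3 t5 t2 x (omega * z) = theta 1 t5 t2 x z"
    using omega3 unfolding theta_def omega_inv by simp algebra
qed



abbreviation "w \<equiv> inverse omega"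

lift_definition rot :: "complex fls \<Rightarrow> complex fls" is "\<lambda>f n. (inverse omega) powi n * f n"
  by (auto elim: eventually_mono)

lemma rot_nth [simp]: "fls_nth (rot f) n = w powi n * fls_nth f n"
  by transfer simp

lemma w_nz: "w \<noteq> 0" using omega_nz by simp

lemma rot_add [simp]: "rot (f + g) = rot f + rot g"
  by (rule fls_eqI) (simp add: algebra_simps)
lemma rot_diff [simp]: "rot (f - g) = rot f - rot g"
  by (rule fls_eqI) (simp add: algebra_simps)
lemma rot_uminus [simp]: "rot (- f) = - rot f"
  by (rule fls_eqI) (simp add: algebra_simps)
lemma rot_const [simp]: "rot (fls_const c) = fls_const c"
  by (rule fls_eqI) simp
lemma rot_numeral [simp]: "rot (numeral k) = numeral k"
  using rot_const[of "numeral k"] by simp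
lemma rot_0 [simp]: "rot 0 = 0"
  by (rule fls_eqI) simp
lemma rot_1 [simp]: "rot 1 = 1"
  by (rule fls_eqI) simp
lemma rot_eq_0_iff [simp]: "rot f = 0 \<longleftrightarrow> f = 0"
  using omega_nz by (simp add: fls_eq_iff)

lemma rot_subdegree [simp]: "fls_subdegree (rot f) = fls_subdegree f"
proof (cases "f = 0")
  case False
  show ?thesis
    by (rule fls_subdegree_eqI) (use False w_nz in auto)
qed simp

lemma rot_mult [simp]: "rot (f * g) = rot f * rot g"
proof (rule fls_eqI)
  fix n
  have "fls_nth (rot (f * g)) n = w powi n * (\<Sum>i=fls_subdegree f..n - fls_subdegree g. fls_nth f i * fls_nth g (n - i))"
    by (simp add: fls_times_nth(2))
  also have "\<dots> = (\<Sum>i=fls_subdegree f..n - fls_subdegree g. (w powi i * fls_nth f i) * (w powi (n - i) * fls_nth g (n - i)))"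
    unfolding sum_distrib_left
  proof (rule sum.cong)
    fix i
    have "w powi n = w powi i * w powi (n - i)"
      using power_int_add[OF disjI1[OF w_nz], of i "n - i"] by simp
    then show "w powi n * (fls_nth f i * fls_nth g (n - i)) = w powi i * fls_nth f i * (w powi (n - i) * fls_nth g (n - i))"
      by (simp add: mult_ac)
  qed simp
  also have "\<dots> = fls_nth (rot f * rot g) n"
    by (simp add: fls_times_nth(2))
  finally show "fls_nth (rot (f * g)) n = fls_nth (rot f * rot g) n" .
qed

lemma rot_power [simp]: "rot (f ^ n) = rot f ^ n"
  by (induction n) simp_all

lemma rot_sum [simp]: "rot (sum g S) = (\<Sum>i\<in>S. rot (g i))"
  by (induction S rule: infinite_finite_induct) simp_all

lemma rot_inverse [simp]: "rot (inverse f) = inverse (rot f)"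
proof (cases "f = 0")
  case False
  have "rot f * rot (inverse f) = 1" using False by (simp flip: rot_mult)
  then show ?thesis using False by (metis inverse_unique)
qed simp

lemma rot_xi: "rot xi = fls_const omega * xi"
  by (rule fls_eqI) (simp add: xi_def)

definition en :: "'a^'n^'m \<Rightarrow> 'm \<Rightarrow> 'n \<Rightarrow> 'a" where "en A i j = vec_nth (vec_nth A i) j"

lemma dxi_nth: "fls_nth (dxi f) n = - (of_int (n - 1) * fls_nth f (n - 1))"
  unfolding dxi_def by (simp add: fls_X_power_times_conv_shift algebra_simps)

lemma dxi_add [simp]: "dxi (f + g) = dxi f + dxi g"
  unfolding dxi_def by (simp add: algebra_simps)
lemma dxi_diff [simp]: "dxi (f - g) = dxi f - dxi g"
  unfolding dxi_def by (simp add: algebra_simps)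
lemma dxi_const [simp]: "dxi (fls_const c) = 0"
  unfolding dxi_def by simp
lemma dxi_0 [simp]: "dxi 0 = 0"
  unfolding dxi_def by simp
lemma dxi_1 [simp]: "dxi 1 = 0"
  unfolding dxi_def by simp
lemma dxi_mult [simp]: "dxi (f * g) = dxi f * g + f * dxi g"
  unfolding dxi_def by (simp add: algebra_simps)
lemma dxi_sum [simp]: "dxi (sum g S) = (\<Sum>i\<in>S. dxi (g i))"
  by (induction S rule: infinite_finite_induct) simp_all

lemma rot_dxi: "rot (dxi f) = fls_const w * dxi (rot f)"
proof (rule fls_eqI)
  fix n
  have "w powi n = w * w powi (n - 1)"
    using power_int_add[OF disjI1[OF w_nz], of 1 "n - 1"] by simp
  then show "fls_nth (rot (dxi f)) n = fls_nth (fls_const w * dxi (rot f)) n"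
    by (simp add: dxi_nth)
qed



definition mrot :: "complex fls^'n^'m \<Rightarrow> complex fls^'n^'m" where
  "mrot A = (\<chi> i j. rot (en A i j))"

lemma en_chi [simp]: "en (\<chi> i j. f i j) i j = f i j"
  by (simp add: en_def)

lemma mat_eq_en: "A = B \<longleftrightarrow> (\<forall>i j. en A i j = en B i j)"
  by (simp add: en_def vec_eq_iff)

lemma en_mult: "en (A ** B) i j = (\<Sum>k\<in>UNIV. en A i k * en B k j)"
  by (simp add: en_def matrix_matrix_mult_def)
lemma en_add [simp]: "en (A + B) i j = en A i j + en B i j"
  by (simp add: en_def)
lemma en_diff [simp]: "en (A - B) i j = en A i j - en B i j"
  by (simp add: en_def)
lemma en_mat: "en (mat c) i j = (if i = j then c else 0)"
  by (simp add: en_def mat_def)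
lemma en_0 [simp]: "en 0 i j = 0"
  by (simp add: en_def)
lemma en_matL [simp]: "en (mat (c::'a::semiring_1) ** A) i j = c * en A i j"
proof -
  have "en (mat c ** A) i j = (\<Sum>k\<in>UNIV. (if i = k then c else 0) * en A k j)"
    by (simp add: en_mult en_mat)
  also have "\<dots> = (\<Sum>k\<in>UNIV. (if i = k then c * en A k j else 0))"
    by (rule sum.cong) auto
  finally show ?thesis by simp
qed
lemma en_matR [simp]: "en (A ** mat (c::'a::semiring_1)) i j = en A i j * c"
proof -
  have "en (A ** mat c) i j = (\<Sum>k\<in>UNIV. en A i k * (if k = j then c else 0))"
    by (simp add: en_mult en_mat)
  also have "\<dots> = (\<Sum>k\<in>UNIV. (if k = j then en A i k * c else 0))"
    by (rule sum.cong) auto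
  finally show ?thesis by simp
qed

lemma fls_const_sum: "fls_const (sum f S) = (\<Sum>i\<in>S. fls_const (f i))"
  by (induction S rule: infinite_finite_induct) (simp_all add: fls_plus_const[symmetric])

lemma mrot_en [simp]: "en (mrot A) i j = rot (en A i j)"
  by (simp add: mrot_def)

lemma mrot_mult: "mrot (A ** B) = mrot A ** mrot B"
  by (simp add: mat_eq_en en_mult)
lemma mrot_add: "mrot (A + B) = mrot A + mrot B"
  by (simp add: mat_eq_en)
lemma mrot_diff: "mrot (A - B) = mrot A - mrot B"
  by (simp add: mat_eq_en)
lemma mrot_mat: "mrot (mat c) = mat (rot c)"
  by (simp add: mat_eq_en en_mat)

lemma en_mdxi [simp]: "en (mdxi A) i j = dxi (en A i j)"
  by (simp add: mdxi_def en_def)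
lemma en_cmat [simp]: "en (cmat A) i j = fls_const (en A i j)"
  by (simp add: cmat_def en_def)
lemma en_sm [simp]: "en (sm s A) i j = s * en A i j"
  by (simp add: sm_def en_def)

lemma mrot_mdxi: "mrot (mdxi A) = mat (fls_const w) ** mdxi (mrot A)"
  by (simp add: mat_eq_en rot_dxi)

lemma mdxi_mult: "mdxi (A ** B) = mdxi A ** B + A ** mdxi B"
  by (simp add: mat_eq_en en_mult sum.distrib)
lemma mdxi_add: "mdxi (A + B) = mdxi A + mdxi B"
  by (simp add: mat_eq_en)
lemma mdxi_diff: "mdxi (A - B) = mdxi A - mdxi B"
  by (simp add: mat_eq_en)
lemma mdxi_cmat [simp]: "mdxi (cmat A) = 0"
  by (simp add: mat_eq_en)
lemma mdxi_mat_const [simp]: "mdxi (mat (fls_const c)) = 0"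
  by (simp add: mat_eq_en en_mat)
lemma mrot_cmat [simp]: "mrot (cmat A) = cmat A"
  by (simp add: mat_eq_en)

lemma sm_mat: "sm s A = mat s ** A"
  by (simp add: mat_eq_en)
lemma mat_comm: "A ** mat (s::'a::comm_semiring_1) = mat s ** A"
  by (simp add: mat_eq_en mult.commute)
lemma mat_mult_mat: "mat (s::'a::comm_semiring_1) ** mat t = (mat (s * t) :: 'a^'n^'n)"
  by (simp add: mat_eq_en en_mat)
lemma cmat_mult: "cmat (A ** B) = cmat A ** cmat B"
  by (simp add: mat_eq_en en_mult fls_const_sum)
lemma cmat_mat: "cmat (mat c) = mat (fls_const c)"
  by (simp add: mat_eq_en en_mat)

lemma mat_rdistrib: "(A + B) ** C = A ** C + B ** (C :: 'a::semiring_1^'n^'n)"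
  by (simp add: mat_eq_en en_mult sum.distrib algebra_simps)
lemma mat_ldistrib: "C ** (A + B) = C ** A + C ** (B :: 'a::semiring_1^'n^'n)"
  by (simp add: mat_eq_en en_mult sum.distrib algebra_simps)
lemma mat_rdiff: "(A - B) ** C = A ** C - B ** (C :: 'a::ring_1^'n^'n)"
  by (simp add: mat_eq_en en_mult sum_subtractf algebra_simps)
lemma mat_ldiff: "C ** (A - B) = C ** A - C ** (B :: 'a::ring_1^'n^'n)"
  by (simp add: mat_eq_en en_mult sum_subtractf algebra_simps)




lemma mat3_eq: "(A::'a^3^3) = B \<longleftrightarrow>
  en A 1 1 = en B 1 1 \<and> en A 1 2 = en B 1 2 \<and> en A 1 3 = en B 1 3 \<and>
  en A 2 1 = en B 2 1 \<and> en A 2 2 = en B 2 2 \<and> en A 2 3 = en B 2 3 \<and>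
  en A 3 1 = en B 3 1 \<and> en A 3 2 = en B 3 2 \<and> en A 3 3 = en B 3 3"
  unfolding en_def by (simp add: vec_eq_iff forall_3 conj_ac)

lemma en_mult3: "en ((A::'a::semiring_1^3^3) ** B) i j = en A i 1 * en B 1 j + en A i 2 * en B 2 j + en A i 3 * en B 3 j"
  unfolding en_def by (simp add: matrix_matrix_mult_def sum_3)

lemma en_vec3 [simp]:
  "en (vector [vector [a11,a12,a13], vector [a21,a22,a23], vector [a31,a32,a33]] :: 'a::zero^3^3) 1 1 = a11"
  "en (vector [vector [a11,a12,a13], vector [a21,a22,a23], vector [a31,a32,a33]] :: 'a::zero^3^3) 1 2 = a12"
  "en (vector [vector [a11,a12,a13], vector [a21,a22,a23], vector [a31,a32,a33]] :: 'a::zero^3^3) 1 3 = a13"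
  "en (vector [vector [a11,a12,a13], vector [a21,a22,a23], vector [a31,a32,a33]] :: 'a::zero^3^3) 2 1 = a21"
  "en (vector [vector [a11,a12,a13], vector [a21,a22,a23], vector [a31,a32,a33]] :: 'a::zero^3^3) 2 2 = a22"
  "en (vector [vector [a11,a12,a13], vector [a21,a22,a23], vector [a31,a32,a33]] :: 'a::zero^3^3) 2 3 = a23"
  "en (vector [vector [a11,a12,a13], vector [a21,a22,a23], vector [a31,a32,a33]] :: 'a::zero^3^3) 3 1 = a31"
  "en (vector [vector [a11,a12,a13], vector [a21,a22,a23], vector [a31,a32,a33]] :: 'a::zero^3^3) 3 2 = a32"
  "en (vector [vector [a11,a12,a13], vector [a21,a22,a23], vector [a31,a32,a33]] :: 'a::zero^3^3) 3 3 = a33"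
  by (simp_all add: en_def)

lemma en_transpose [simp]: "en (transpose A) i j = en A j i"
  by (simp add: en_def transpose_def)

lemma en_mat1_3 [simp]:
  "en (mat c :: 'a::zero^3^3) 1 1 = c" "en (mat c :: 'a::zero^3^3) 2 2 = c" "en (mat c :: 'a::zero^3^3) 3 3 = c"
  "en (mat c :: 'a::zero^3^3) 1 2 = 0" "en (mat c :: 'a::zero^3^3) 1 3 = 0" "en (mat c :: 'a::zero^3^3) 2 1 = 0"
  "en (mat c :: 'a::zero^3^3) 2 3 = 0" "en (mat c :: 'a::zero^3^3) 3 1 = 0" "en (mat c :: 'a::zero^3^3) 3 2 = 0"
  by (simp_all add: en_mat)

lemmas m3 = mat3_eq en_mult3 Smat_def diag3_def

lemma SSt: "Smat ** transpose Smat = mat 1"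
  by (simp add: m3)
lemma StS: "transpose Smat ** Smat = mat 1"
  by (simp add: m3)

lemma S_diag: "transpose Smat ** diag3 a b c ** Smat = diag3 c (a::complex) b"
  by (simp add: m3)

lemma P_diag: "cmat (transpose Smat) ** diag3 a b c ** cmat Smat = diag3 c (a::complex fls) b"
  by (simp add: m3)
lemma P'_diag: "cmat Smat ** diag3 a b c ** cmat (transpose Smat) = diag3 b (c::complex fls) a"
  by (simp add: m3)

lemma PP': "cmat (transpose Smat) ** cmat Smat = mat 1"
  by (simp add: cmat_mult[symmetric] StS cmat_mat)
lemma P'P: "cmat Smat ** cmat (transpose Smat) = mat 1"
  by (simp add: cmat_mult[symmetric] SSt cmat_mat)

lemma mrot_diag3: "mrot (diag3 a b c) = diag3 (rot a) (rot b) (rot c)"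
  by (simp add: mat3_eq diag3_def)

lemma M_rot: "diag3 omega 1 w ** Mmat = Mmat ** transpose Smat"
proof -
  have o3: "omega * omega * omega = 1" using omega3 by (simp add: power3_eq_cube)
  show ?thesis
    by (simp add: m3 Mmat_def omega_inv power2_eq_square o3 mult.assoc[symmetric])
qed

definition Minv :: "complex^3^3" where
  "Minv = vector [vector [1/3, 1/3, 1/3], vector [omega^2/3, 1/3, omega/3], vector [omega/3, 1/3, omega^2/3]]"

lemma M_Minv: "Mmat ** Minv = mat 1"
  unfolding m3 Minv_def Mmat_def en_vec3 en_mat1_3 o2 unfolding omega_alt
  by (simp add: complex_eq_iff field_simps)
lemma Minv_M: "Minv ** Mmat = mat 1"
  unfolding m3 Minv_def Mmat_def en_vec3 en_mat1_3 o2 unfolding omega_alt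
  by (simp add: complex_eq_iff field_simps)



lemma sm_multL [simp]: "sm s A ** B = sm s (A ** B)"
  by (simp add: mat_eq_en en_mult sum_distrib_left mult_ac)
lemma sm_multR [simp]: "A ** sm s B = sm s (A ** B)"
  by (simp add: mat_eq_en en_mult sum_distrib_left mult_ac)
lemma sm_sm [simp]: "sm s (sm t A) = sm (s * t) A"
  by (simp add: mat_eq_en mult_ac)
lemma sm_diff: "sm s A - sm s B = sm s (A - B)"
  by (simp add: mat_eq_en algebra_simps)
lemma sm_add: "sm s A + sm s B = sm s (A + B)"
  by (simp add: mat_eq_en algebra_simps)
lemma sm_one [simp]: "sm 1 A = A"
  by (simp add: mat_eq_en)
lemma mrot_sm: "mrot (sm s A) = sm (rot s) (mrot A)"
  by (simp add: mat_eq_en)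
lemma mat_mult_zero [simp]: "(A::'a::semiring_1^'n^'m) ** 0 = 0"
  by (simp add: mat_eq_en en_mult)
lemma mdxi_sm: "mdxi (sm (fls_const c) A) = sm (fls_const c) (mdxi A)"
  by (simp add: mat_eq_en)

lemma mrot_mdxi': "mrot (mdxi A) = sm (fls_const w) (mdxi (mrot A))"
  by (simp add: mat_eq_en rot_dxi)

lemma xi_nz [simp]: "xi \<noteq> 0" by (simp add: xi_def)

definition Dg :: "complex fls^3^3" where "Dg = diag3 xi 1 (inverse xi)"
definition Dgi :: "complex fls^3^3" where "Dgi = diag3 (inverse xi) 1 xi"
definition c0 :: "complex fls" where "c0 = fls_const (\<i> / of_real (sqrt 3))"
definition c1 :: "complex fls" where "c1 = fls_const (of_real (sqrt 3) / \<i>)"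
definition Gi :: "complex fls^3^3" where "Gi = sm c1 (cmat Minv ** Dgi)"

abbreviation "P \<equiv> cmat (transpose Smat)"
abbreviation "P' \<equiv> cmat Smat"

lemma c01: "c0 * c1 = 1"
proof -
  have "(\<i> / of_real (sqrt 3)) * (of_real (sqrt 3) / \<i>) = (1::complex)" by (simp add: field_simps)
  then show ?thesis unfolding c0_def c1_def fls_const_mult_const by simp
qed

lemma Dg_Dgi: "Dg ** Dgi = mat 1" and Dgi_Dg: "Dgi ** Dg = mat 1"
  by (simp_all add: m3 Dg_def Dgi_def)

lemma gmat_alt: "gmat = sm c0 (Dg ** cmat Mmat)"
  by (simp add: gmat_def c0_def Dg_def)

lemma g_Gi: "gmat ** Gi = mat 1"
proof -
  have "gmat ** Gi = sm (c1 * c0) (Dg ** (cmat Mmat ** cmat Minv) ** Dgi)"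
    by (simp add: gmat_alt Gi_def matrix_mul_assoc)
  also have "\<dots> = mat 1"
    by (simp add: c01 mult.commute[of c1] cmat_mult[symmetric] M_Minv cmat_mat Dg_Dgi)
  finally show ?thesis .
qed

lemma Gi_g: "Gi ** gmat = mat 1"
proof -
  have "Gi ** gmat = sm (c0 * c1) (cmat Minv ** (Dgi ** Dg) ** cmat Mmat)"
    by (simp add: gmat_alt Gi_def matrix_mul_assoc)
  also have "\<dots> = mat 1"
    by (simp add: c01 cmat_mult[symmetric] Minv_M cmat_mat Dgi_Dg)
  finally show ?thesis .
qed

lemma inv_unique: "A ** B = mat 1 \<Longrightarrow> B ** A = mat 1 \<Longrightarrow> matrix_inv (A::'a::semiring_1^'n^'n) = B"
  unfolding matrix_inv_def
proof (rule some_equality)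
  fix B' assume AB: "A ** B = mat 1" "B ** A = mat 1" and "A ** B' = mat 1 \<and> B' ** A = mat 1"
  then have h: "B' ** A = mat 1" by simp
  have "B' = B' ** (A ** B)" using AB by simp
  also have "\<dots> = (B' ** A) ** B" by (simp add: matrix_mul_assoc)
  also have "\<dots> = B" using h by simp
  finally show "B' = B" .
qed simp

lemma matrix_inv_g: "matrix_inv gmat = Gi"
  by (rule inv_unique[OF g_Gi Gi_g])

lemma rot_inv_xi: "rot (inverse xi) = fls_const w * inverse xi"
  by (simp add: rot_xi fls_inverse_const)

lemma mrot_g: "mrot gmat = gmat ** P"
proof -
  have "mrot gmat = sm c0 (diag3 (fls_const omega * xi) 1 (fls_const w * inverse xi) ** cmat Mmat)"
    by (simp add: gmat_alt mrot_sm mrot_mult mrot_diag3 Dg_def rot_xi rot_inv_xi c0_def fls_inverse_const)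
  also have "diag3 (fls_const omega * xi) 1 (fls_const w * inverse xi) = Dg ** cmat (diag3 omega 1 w)"
    by (simp add: m3 Dg_def mult.commute)
  also have "(Dg ** cmat (diag3 omega 1 w)) ** cmat Mmat = Dg ** cmat Mmat ** P"
    by (simp add: matrix_mul_assoc[symmetric] cmat_mult[symmetric] M_rot)
  finally show ?thesis by (simp add: gmat_alt)
qed

lemma mrot_Gi: "mrot Gi = P' ** Gi"
proof -
  have "mrot gmat ** mrot Gi = mat 1"
    by (simp add: mrot_mult[symmetric] g_Gi mrot_mat)
  then have "gmat ** (P ** mrot Gi) = mat 1" by (simp add: mrot_g matrix_mul_assoc)
  then have "Gi ** (gmat ** (P ** mrot Gi)) = Gi" by simp
  then have "P ** mrot Gi = Gi" by (simp add: matrix_mul_assoc Gi_g)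
  then have "P' ** (P ** mrot Gi) = P' ** Gi" by simp
  then show ?thesis by (simp add: matrix_mul_assoc P'P)
qed

lemma mrot_Lpoly: "mrot (Lpoly t5 t2 x QU QV QW PU PV PW lam) = Lpoly t5 t2 x QU QV QW PU PV PW (rot lam)"
  by (simp add: mat_eq_en Lpoly_def en_def[symmetric])

lemma co3: "fls_const omega ^ 3 = 1"
  by (simp add: fls_const_power[symmetric] omega3)
lemma co2: "fls_const omega ^ 2 = fls_const w"
  by (simp add: fls_const_power[symmetric] omega_inv)
lemma rot_xi3: "rot xi ^ 3 = xi ^ 3"
  by (simp add: rot_xi power_mult_distrib co3)

lemma mrot_Lcal: "mrot (Lcal t5 t2 x QU QV QW PU PV PW) = sm (fls_const w) (P' ** Lcal t5 t2 x QU QV QW PU PV PW ** P)"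
proof -
  define Lp where "Lp = Lpoly t5 t2 x QU QV QW PU PV PW (xi^3)"
  have L: "Lcal t5 t2 x QU QV QW PU PV PW = sm (fls_const 3 * xi^2) (Gi ** Lp ** gmat) - Gi ** mdxi gmat"
    by (simp add: Lcal_def matrix_inv_g Lp_def)
  have "mrot (Lcal t5 t2 x QU QV QW PU PV PW) =
     sm (fls_const w * (fls_const 3 * xi ^ 2)) (P' ** Gi ** Lp ** gmat ** P) - P' ** Gi ** sm (fls_const w) (mdxi gmat ** P)"
    unfolding L by (simp add: mrot_diff mrot_sm mrot_mult mrot_Gi Lp_def mrot_Lpoly rot_xi3 rot_xi power_mult_distrib co2 co3 mult_ac mrot_mdxi' mrot_g mdxi_mult matrix_mul_assoc)
  also have "\<dots> = sm (fls_const w) (P' ** Lcal t5 t2 x QU QV QW PU PV PW ** P)"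
    unfolding L by (simp add: mat_rdiff mat_ldiff matrix_mul_assoc sm_diff[symmetric])
  finally show ?thesis .
qed



lemma rot_cxi: "rot (fls_const c * xi ^ k) = fls_const (c * omega ^ k) * xi ^ k"
  by (simp add: rot_xi power_mult_distrib fls_const_power[symmetric] mult_ac
      flip: fls_const_mult_const)

lemma rot_theta:
  "rot (theta_fls 1 t5 t2 x) = theta_fls 2 t5 t2 x"
  "rot (theta_fls 2 t5 t2 x) = theta_fls 3 t5 t2 x"
  "rot (theta_fls 3 t5 t2 x) = theta_fls 1 t5 t2 x"
proof -
  have n: "(1::nat) - 1 = 0" "(2::nat) - 1 = 1" "(3::nat) - 1 = 2" by simp_all
  have r: "rot (fls_const c * xi) = fls_const (c * omega ^ 1) * xi" for c
    using rot_cxi[of c 1] by simp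
  have a: "3/7 * omega^(1-1) * omega^7 = 3/7 * omega^(2-1)"
          "inverse omega^(1-1) * t5 * omega^5 = inverse omega^(2-1) * t5"
          "inverse omega^(1-1) * t2 * omega^2 = inverse omega^(2-1) * t2"
          "omega^(1-1) * x * omega^1 = omega^(2-1) * x"
    using omega3 unfolding n omega_inv power_0 power_one_right by algebra+
  have b: "3/7 * omega^(2-1) * omega^7 = 3/7 * omega^(3-1)"
          "inverse omega^(2-1) * t5 * omega^5 = inverse omega^(3-1) * t5"
          "inverse omega^(2-1) * t2 * omega^2 = inverse omega^(3-1) * t2"
          "omega^(2-1) * x * omega^1 = omega^(3-1) * x"
    using omega3 unfolding n omega_inv power_0 power_one_right by algebra+
  have c: "3/7 * omega^(3-1) * omega^7 = 3/7 * omega^(1-1)"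
          "inverse omega^(3-1) * t5 * omega^5 = inverse omega^(1-1) * t5"
          "inverse omega^(3-1) * t2 * omega^2 = inverse omega^(1-1) * t2"
          "omega^(3-1) * x * omega^1 = omega^(1-1) * x"
    using omega3 unfolding n omega_inv power_0 power_one_right by algebra+
  show "rot (theta_fls 1 t5 t2 x) = theta_fls 2 t5 t2 x"
    unfolding theta_fls_def rot_add rot_cxi r a ..
  show "rot (theta_fls 2 t5 t2 x) = theta_fls 3 t5 t2 x"
    unfolding theta_fls_def rot_add rot_cxi r b ..
  show "rot (theta_fls 3 t5 t2 x) = theta_fls 1 t5 t2 x"
    unfolding theta_fls_def rot_add rot_cxi r c ..
qed

lemma mrot_dTheta: "mrot (dTheta t5 t2 x) = sm (fls_const w) (P' ** dTheta t5 t2 x ** P)"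
proof -
  have "mrot (dTheta t5 t2 x) = diag3 (fls_const w * dxi (theta_fls 2 t5 t2 x))
     (fls_const w * dxi (theta_fls 3 t5 t2 x)) (fls_const w * dxi (theta_fls 1 t5 t2 x))"
    unfolding dTheta_def mrot_diag3 rot_dxi rot_theta ..
  also have "\<dots> = sm (fls_const w) (diag3 (dxi (theta_fls 2 t5 t2 x)) (dxi (theta_fls 3 t5 t2 x)) (dxi (theta_fls 1 t5 t2 x)))"
    by (simp add: mat3_eq diag3_def)
  finally show ?thesis by (simp add: dTheta_def P'_diag)
qed

lemma cow: "fls_const omega * fls_const w = 1"
  using omega_nz by (simp add: fls_const_mult_const)

lemma PP'_cancel: "X ** P ** P' = X"
  by (simp add: matrix_mul_assoc[symmetric] PP')
lemma P'P_cancel: "X ** P' ** P = X"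
  by (simp add: matrix_mul_assoc[symmetric] P'P)

lemma transformed:
  fixes Y :: "complex fls^3^3"
  assumes "mdxi Y + Y ** dTheta t5 t2 x = Lcal t5 t2 x QU QV QW PU PV PW ** Y"
  shows "mdxi (P ** mrot Y ** P') + (P ** mrot Y ** P') ** dTheta t5 t2 x
           = Lcal t5 t2 x QU QV QW PU PV PW ** (P ** mrot Y ** P')"
proof -
  define L where "L = Lcal t5 t2 x QU QV QW PU PV PW"
  define D where "D = dTheta t5 t2 x"
  define Z where "Z = mrot Y"
  have "mrot (mdxi Y + Y ** D) = mrot (L ** Y)" using assms by (simp add: L_def D_def)
  then have "sm (fls_const w) (mdxi Z) + Z ** sm (fls_const w) (P' ** D ** P) = sm (fls_const w) (P' ** L ** P) ** Z"
    by (simp add: mrot_add mrot_mult mrot_mdxi' Z_def D_def L_def mrot_dTheta mrot_Lcal)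
  then have "sm (fls_const w) (mdxi Z + Z ** P' ** D ** P) = sm (fls_const w) (P' ** L ** P ** Z)"
    by (simp add: sm_add matrix_mul_assoc)
  then have "sm (fls_const omega) (sm (fls_const w) (mdxi Z + Z ** P' ** D ** P)) = sm (fls_const omega) (sm (fls_const w) (P' ** L ** P ** Z))"
    by simp
  then have e: "mdxi Z + Z ** P' ** D ** P = P' ** L ** P ** Z"
    by (simp only: sm_sm cow sm_one)
  then have "P ** (mdxi Z + Z ** P' ** D ** P) ** P' = P ** (P' ** L ** P ** Z) ** P'"
    by simp
  then show ?thesis
    by (simp add: mat_ldistrib mat_rdistrib matrix_mul_assoc PP' P'P PP'_cancel P'P_cancel mdxi_mult flip: L_def D_def Z_def)
qed



lemma en_Yser: "en (Yser Phi) i j = fps_to_fls (Abs_fps (\<lambda>k. en (Phi k) i j))"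
  by (simp add: Yser_def en_def)

lemma nth_en_Yser: "fls_nth (en (Yser Phi) i j) n = (if n < 0 then 0 else en (Phi (nat n)) i j)"
  by (simp add: en_Yser)

lemma Yser_eqI: "(\<And>i j n. fls_nth (en A i j) n = fls_nth (en (Yser Phi) i j) n) \<Longrightarrow> A = Yser Phi"
  by (simp add: mat_eq_en fls_eq_iff)

lemma mrot_Yser: "mrot (Yser Phi) = Yser (\<lambda>k. \<chi> i j. w ^ k * en (Phi k) i j)"
proof (rule Yser_eqI)
  fix i j n
  show "fls_nth (en (mrot (Yser Phi)) i j) n = fls_nth (en (Yser (\<lambda>k. \<chi> i j. w ^ k * en (Phi k) i j)) i j) n"
  proof (cases "n < 0")
    case False
    then have "n = int (nat n)" by simp
    then have "w powi n = w ^ nat n" by (metis power_int_of_nat)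
    then show ?thesis using False by (simp add: nth_en_Yser)
  qed (simp add: nth_en_Yser)
qed

lemma fls_nth_sum: "fls_nth (sum f S) n = (\<Sum>i\<in>S. fls_nth (f i) n)"
  by (induction S rule: infinite_finite_induct) simp_all

lemma cmat_Yser: "cmat A ** Yser Q = Yser (\<lambda>k. A ** Q k)"
  by (rule Yser_eqI) (simp add: en_mult fls_nth_sum nth_en_Yser)

lemma Yser_cmat: "Yser Q ** cmat A = Yser (\<lambda>k. Q k ** A)"
  by (rule Yser_eqI) (simp add: en_mult fls_nth_sum nth_en_Yser)

lemma Yser_inj: "Yser A = Yser B \<Longrightarrow> A k = B k"
proof -
  assume "Yser A = Yser B"
  then have "\<forall>i j. fls_nth (en (Yser A) i j) (int k) = fls_nth (en (Yser B) i j) (int k)" by simp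
  then show "A k = B k" by (simp add: nth_en_Yser mat_eq_en)
qed

lemma det_Yser: assumes "Q 0 = mat 1" shows "det (Yser Q) \<noteq> 0"
proof -
  define F where "F i j = Abs_fps (\<lambda>k. Q k $ i $ j)" for i j
  have Y: "Yser Q $ i $ j = fps_to_fls (F i j)" for i j by (simp add: Yser_def F_def)
  have "det (Yser Q) = fps_to_fls (
    F 1 1 * F 2 2 * F 3 3 + F 1 2 * F 2 3 * F 3 1 + F 1 3 * F 2 1 * F 3 2 -
    F 1 1 * F 2 3 * F 3 2 - F 1 2 * F 2 1 * F 3 3 - F 1 3 * F 2 2 * F 3 1)"
    unfolding det_3 Y by (simp only: fls_times_fps_to_fls fps_to_fls_plus fps_to_fls_minus)
  moreover have "fls_nth (fps_to_fls (
    F 1 1 * F 2 2 * F 3 3 + F 1 2 * F 2 3 * F 3 1 + F 1 3 * F 2 1 * F 3 2 -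
    F 1 1 * F 2 3 * F 3 2 - F 1 2 * F 2 1 * F 3 3 - F 1 3 * F 2 2 * F 3 1)) 0 = 1"
    by (simp add: F_def assms mat_def)
  ultimately show ?thesis by (metis fls_zero_nth zero_neq_one)
qed




lemma dxi_const_eq: assumes "dxi c = 0" shows "c = fls_const (fls_nth c 0)"
proof (rule fls_eqI)
  fix n
  have "fls_nth (dxi c) (n + 1) = 0" using assms by simp
  then have "of_int n * fls_nth c n = 0" by (simp add: dxi_nth)
  then show "fls_nth c n = fls_nth (fls_const (fls_nth c 0)) n" by auto
qed

lemma offdiag_zero:
  assumes f: "fls_subdegree f = -6" "f \<noteq> 0" and e: "dxi c = f * c"
  shows "c = 0"
proof (rule ccontr)
  assume c: "c \<noteq> 0"
  define s where "s = fls_subdegree c"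
  have "fls_subdegree (f * c) = s - 6" using f c by (simp add: s_def)
  moreover have "f * c \<noteq> 0" using f c by simp
  ultimately have "fls_nth (f * c) (s - 6) \<noteq> 0" by (metis nth_fls_subdegree_nonzero)
  moreover have "fls_nth (dxi c) (s - 6) = 0"
    by (simp add: dxi_nth s_def)
  ultimately show False using e by simp
qed

lemma theta_nth_low:
  assumes "m \<le> -7"
  shows "fls_nth (theta_fls j t5 t2 x) m = (if m = -7 then 3/7 * omega^(j-1) else 0)"
  using assms by (simp add: theta_fls_def xi_def)

lemma dtheta_nth_low:
  assumes "n \<le> -6"
  shows "fls_nth (dxi (theta_fls j t5 t2 x)) n = (if n = -6 then 3 * omega^(j-1) else 0)"
  using assms by (simp add: dxi_nth theta_nth_low)

lemma dtheta_diff_sub: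
  assumes "omega^(i-1) \<noteq> omega^(j-1)"
  shows "fls_subdegree (dxi (theta_fls i t5 t2 x) - dxi (theta_fls j t5 t2 x)) = -6"
    and "dxi (theta_fls i t5 t2 x) - dxi (theta_fls j t5 t2 x) \<noteq> 0"
proof -
  have "fls_nth (dxi (theta_fls i t5 t2 x) - dxi (theta_fls j t5 t2 x)) (-6) \<noteq> 0"
    using assms by (simp add: dtheta_nth_low)
  moreover have "fls_nth (dxi (theta_fls i t5 t2 x) - dxi (theta_fls j t5 t2 x)) k = 0" if "k < -6" for k
    using that by (simp add: dtheta_nth_low)
  ultimately show "fls_subdegree (dxi (theta_fls i t5 t2 x) - dxi (theta_fls j t5 t2 x)) = -6"
    and "dxi (theta_fls i t5 t2 x) - dxi (theta_fls j t5 t2 x) \<noteq> 0"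
    by (auto intro: fls_subdegree_eqI)
qed

lemma off_case:
  assumes "dxi c = dxi (theta_fls i t5 t2 x) * c - c * dxi (theta_fls j t5 t2 x)"
      and "omega^(i-1) \<noteq> omega^(j-1)"
  shows "c = 0"
proof (rule offdiag_zero)
  show "fls_subdegree (dxi (theta_fls i t5 t2 x) - dxi (theta_fls j t5 t2 x)) = -6"
       "dxi (theta_fls i t5 t2 x) - dxi (theta_fls j t5 t2 x) \<noteq> 0"
    using dtheta_diff_sub[OF assms(2)] by auto
  show "dxi c = (dxi (theta_fls i t5 t2 x) - dxi (theta_fls j t5 t2 x)) * c"
    using assms(1) by (simp add: algebra_simps)
qed

lemma diag3_off: "i \<noteq> k \<Longrightarrow> en (diag3 a b c) i k = 0"
  using exhaust_3[of i] exhaust_3[of k] by (auto simp: diag3_def)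

lemma unique:
  fixes Y1 Y2 B :: "complex fls^3^3"
  assumes E1: "mdxi Y1 + Y1 ** dTheta t5 t2 x = L ** Y1"
      and E2: "mdxi Y2 + Y2 ** dTheta t5 t2 x = L ** Y2"
      and inv: "Y2 ** B = mat 1" "B ** Y2 = mat 1"
      and n1: "\<And>i. fls_nth (en Y1 i i) 0 = 1"
      and n2: "\<And>i. fls_nth (en Y2 i i) 0 = 1"
  shows "Y1 = Y2"
proof -
  define D where "D = dTheta t5 t2 x"
  define C where "C = B ** Y1"
  have YC: "Y2 ** C = Y1" by (simp add: C_def matrix_mul_assoc inv)
  have m1: "mdxi Y1 = L ** Y1 - Y1 ** D" using E1 by (simp add: D_def algebra_simps)
  have m2: "mdxi Y2 = L ** Y2 - Y2 ** D" using E2 by (simp add: D_def algebra_simps)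
  have "Y2 ** mdxi C = mdxi Y1 - mdxi Y2 ** C"
    using YC by (metis mdxi_mult add_diff_cancel_left')
  also have "\<dots> = Y2 ** (D ** C - C ** D)"
  proof -
    have m1': "mdxi Y1 = L ** (Y2 ** C) - (Y2 ** C) ** D" using m1 YC by simp
    show ?thesis unfolding m1' m2
      by (simp add: mat_rdiff mat_ldiff matrix_mul_assoc)
  qed
  finally have "B ** (Y2 ** mdxi C) = B ** (Y2 ** (D ** C - C ** D))" by simp
  then have eq: "mdxi C = D ** C - C ** D" by (simp add: matrix_mul_assoc inv)
  define d where "d j = dxi (theta_fls j t5 t2 x)" for j
  have D3: "D = diag3 (d 1) (d 2) (d 3)" by (simp add: D_def dTheta_def d_def)
  have dD: "en D 1 1 = d 1" "en D 2 2 = d 2" "en D 3 3 = d 3"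
    by (simp_all add: D3 diag3_def)
  have DC: "en (D ** C) i j = en D i i * en C i j" for i j
  proof -
    have "en (D ** C) i j = (\<Sum>k\<in>UNIV. if k = i then en D i i * en C i j else 0)"
      unfolding en_mult by (rule sum.cong) (auto simp: D3 diag3_off)
    then show ?thesis by simp
  qed
  have CD: "en (C ** D) i j = en C i j * en D j j" for i j
  proof -
    have "en (C ** D) i j = (\<Sum>k\<in>UNIV. if k = j then en C i j * en D j j else 0)"
      unfolding en_mult by (rule sum.cong) (auto simp: D3 diag3_off)
    then show ?thesis by simp
  qed
  have ent: "dxi (en C i j) = en D i i * en C i j - en C i j * en D j j" for i j
    using arg_cong[OF eq, of "\<lambda>M. en M i j"] by (simp add: DC CD)
  have o: "omega ^ (1 - 1) \<noteq> omega ^ (2 - 1)" "omega ^ (1 - 1) \<noteq> omega ^ (3 - 1)"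
          "omega ^ (2 - 1) \<noteq> omega ^ (1 - 1)" "omega ^ (2 - 1) \<noteq> omega ^ (3 - 1)"
          "omega ^ (3 - 1) \<noteq> omega ^ (1 - 1)" "omega ^ (3 - 1) \<noteq> omega ^ (2 - 1)"
    using omega_ne1 omega_sq_ne1 omega_sq_ne by (auto simp: eq_commute[of 1])
  have off: "en C 1 2 = 0" "en C 1 3 = 0" "en C 2 1 = 0" "en C 2 3 = 0" "en C 3 1 = 0" "en C 3 2 = 0"
    by (rule off_case[OF _ o(1)] off_case[OF _ o(2)] off_case[OF _ o(3)] off_case[OF _ o(4)]
        off_case[OF _ o(5)] off_case[OF _ o(6)], use ent dD d_def in simp)+
  have dg: "en C i i = 1" if "i = 1 \<or> i = 2 \<or> i = 3" for i
  proof -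
    have "dxi (en C i i) = 0" using ent[of i i] by simp
    then have c: "en C i i = fls_const (fls_nth (en C i i) 0)" by (rule dxi_const_eq)
    have "en Y1 i i = en (Y2 ** C) i i" using YC by simp
    also have "\<dots> = en Y2 i i * en C i i"
      using that off by (auto simp: en_mult3)
    finally have "fls_nth (en Y1 i i) 0 = fls_nth (en Y2 i i * fls_const (fls_nth (en C i i) 0)) 0"
      using c by metis
    then have "fls_nth (en C i i) 0 = 1" using n1 n2 by simp
    then show ?thesis using c by simp
  qed
  have "C = mat 1"
    unfolding mat3_eq using off dg by simp
  then show ?thesis using YC by simp
qed



lemma part1: "transpose Smat ** expTheta t5 t2 x (omega * z) ** Smat = expTheta t5 t2 x z"
  unfolding expTheta_def S_diag theta_rot ..

lemma chi_en [simp]: "(\<chi> i j. en A i j) = A"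
  by (simp add: en_def vec_eq_iff)

lemma scaled_conj: "transpose Smat ** (\<chi> i j. c * en A i j) ** Smat = (\<chi> i j. c * (transpose Smat ** A ** Smat) $ i $ j)"
  by (simp add: mat_eq_en en_mult sum_distrib_left mult_ac flip: en_def)

theorem mainTheorem8:
  fixes t5 t2 x QU QV QW PU PV PW :: complex and Phi :: "nat \<Rightarrow> complex^3^3"
  assumes "formal_solution t5 t2 x QU QV QW PU PV PW Phi"
  shows "(\<forall>z. transpose Smat ** expTheta t5 t2 x (omega * z) ** Smat = expTheta t5 t2 x z)
         \<and> (\<forall>k. Phi k = (\<chi> i j. inverse omega ^ k * (transpose Smat ** Phi k ** Smat) $ i $ j))"
proof (intro conjI allI)
  fix z show "transpose Smat ** expTheta t5 t2 x (omega * z) ** Smat = expTheta t5 t2 x z"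
    by (rule part1)
next
  fix k
  have P0: "Phi 0 = mat 1" and E1: "mdxi (Yser Phi) + Yser Phi ** dTheta t5 t2 x = Lcal t5 t2 x QU QV QW PU PV PW ** Yser Phi"
    using assms by (simp_all add: formal_solution_def)
  define Phi2 where "Phi2 k = transpose Smat ** (\<chi> i j. w ^ k * en (Phi k) i j) ** Smat" for k
  have Y2: "P ** mrot (Yser Phi) ** P' = Yser Phi2"
    by (simp add: mrot_Yser cmat_Yser Yser_cmat fun_eq_iff Phi2_def[abs_def])
  have E2: "mdxi (Yser Phi2) + Yser Phi2 ** dTheta t5 t2 x = Lcal t5 t2 x QU QV QW PU PV PW ** Yser Phi2"
    using transformed[OF E1] unfolding Y2 .
  have P20: "Phi2 0 = mat 1"
    by (simp add: Phi2_def P0 StS)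
  have "invertible (Yser Phi2)"
    using det_Yser[of Phi2, OF P20] by (simp add: invertible_det_nz)
  then obtain B where B: "Yser Phi2 ** B = mat 1" "B ** Yser Phi2 = mat 1"
    unfolding invertible_def by blast
  have "Yser Phi = Yser Phi2"
    by (rule unique[OF E1 E2 B]) (simp_all add: nth_en_Yser P0 P20 en_mat)
  then have "Phi k = Phi2 k" by (rule Yser_inj)
  then show "Phi k = (\<chi> i j. inverse omega ^ k * (transpose Smat ** Phi k ** Smat) $ i $ j)"
    by (simp add: Phi2_def scaled_conj)
qed


end
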